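(* Let $\Omega\subset\mathbb{R}^n$ be a bounded domain with smooth boundary and outer unit normal $\nu$, let $\vec f:\Omega\times\mathbb{R}\times[0,\infty)\to\mathbb{R}^{n+1}$ be bounded and continuous, let $T>0$, and let $u\in C^{2,1}(Q_T)$, $Q_T=\Omega\times(0,T)$, be a solution of \[ \begin{aligned} \frac{\partial_t u}{\sqrt{1+|du|^2}}&=\operatorname{div}\Big(\frac{du}{\sqrt{1+|du|^2}}\Big)+\vec f(x,u,t)\cdot\frac{(-du,1)}{\sqrt{1+|du|^2}}, && x\in\Omega,\ 0<t<T,\\ du\cdot\nu\big|_{\partial\Omega}&=0, && 0<t<T,\\ u(x,0)&=u_0(x), && x\in\Omega . \end{aligned} \] Then \[ \sup_{Q_T}|u|\le \Big(\sup_{\Omega\times\mathbb{R}\times[0,T]}|\vec f|\Big)\,T+\sup_{\Omega}|u_0| . \]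
   Context: $C^{2,1}(Q_T)$ denotes functions twice continuously differentiable in $x$ and once in $t$; the solution is understood to be regular enough up to $\partial\Omega$ and $t=0$ for the boundary and initial conditions to hold classically. *)

theory Defs
  imports "HOL-Analysis.Analysis"
begin

definition grad :: "((real^'n) \<Rightarrow> real) \<Rightarrow> (real^'n) \<Rightarrow> (real^'n)" where
  "grad f x = (\<chi> i. frechet_derivative f (at x) (axis i 1))"

definition divergence :: "((real^'n) \<Rightarrow> (real^'n)) \<Rightarrow> (real^'n) \<Rightarrow> real" where
  "divergence F x = (\<Sum>i\<in>UNIV. frechet_derivative F (at x) (axis i 1) $ i)"

fun Ck_on :: "nat \<Rightarrow> ((real^'n) \<Rightarrow> real) \<Rightarrow> (real^'n) set \<Rightarrow> bool" where
  "Ck_on 0 f S = continuous_on S f"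
| "Ck_on (Suc k) f S = (continuous_on S f \<and> (\<forall>x\<in>S. f differentiable (at x)) \<and>
      (\<forall>i. Ck_on k (\<lambda>x. frechet_derivative f (at x) (axis i 1)) S))"

definition smooth_on :: "(real^'n) set \<Rightarrow> ((real^'n) \<Rightarrow> real) \<Rightarrow> bool" where
  "smooth_on S f = (\<forall>k. Ck_on k f S)"

text \<open>Omega has smooth boundary with outer unit normal nu: Omega is the sublevel set
  {rho < 0} of a smooth defining function rho with nonvanishing gradient on {rho = 0}
  (= the boundary), and nu is the normalised gradient of rho there.\<close>
definition smooth_boundary_normal :: "(real^'n) set \<Rightarrow> ((real^'n) \<Rightarrow> (real^'n)) \<Rightarrow> bool" where
  "smooth_boundary_normal \<Omega> \<nu> = (\<exists>\<rho>. smooth_on UNIV \<rho> \<and> \<Omega> = {x. \<rho> x < 0} \<and>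
      (\<forall>x. \<rho> x = 0 \<longrightarrow> grad \<rho> x \<noteq> 0) \<and>
      (\<forall>x\<in>frontier \<Omega>. \<nu> x = grad \<rho> x /\<^sub>R norm (grad \<rho> x)))"

definition dx :: "((real^'n) \<times> real \<Rightarrow> real) \<Rightarrow> (real^'n) \<times> real \<Rightarrow> (real^'n)" where
  "dx u p = grad (\<lambda>y. u (y, snd p)) (fst p)"

definition dt :: "((real^'n) \<times> real \<Rightarrow> real) \<Rightarrow> (real^'n) \<times> real \<Rightarrow> real" where
  "dt u p = deriv (\<lambda>s. u (fst p, s)) (snd p)"

definition C21_on :: "((real^'n) \<times> real) set \<Rightarrow> ((real^'n) \<times> real \<Rightarrow> real) \<Rightarrow> bool" where
  "C21_on Q u = (continuous_on Q u \<and>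
     (\<forall>(x,t)\<in>Q. (\<lambda>y. u (y,t)) differentiable (at x) \<and> (\<lambda>s. u (x,s)) differentiable (at t) \<and>
        (\<forall>i. (\<lambda>y. dx u (y,t) $ i) differentiable (at x))) \<and>
     continuous_on Q (dt u) \<and> continuous_on Q (dx u) \<and>
     (\<forall>i j. continuous_on Q (\<lambda>(x,t). grad (\<lambda>y. dx u (y,t) $ i) x $ j)))"

end

theory Submission
  imports Defs
begin

lemma linear_vec_expand:
  fixes L :: "real^'n \<Rightarrow> real"
  assumes "linear L"
  shows "L h = (\<chi> i. L (axis i 1)) \<bullet> h"
proof -
  have "L h = L (\<Sum>i\<in>UNIV. h$i *\<^sub>R axis i 1)"
    by (metis (no_types, lifting) basis_expansion scalar_mult_eq_scaleR sum.cong)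
  also have "\<dots> = (\<Sum>i\<in>UNIV. h$i * L (axis i 1))"
    using assms by (simp add: linear_sum linear_scale)
  also have "\<dots> = (\<chi> i. L (axis i 1)) \<bullet> h"
    by (simp add: inner_vec_def mult.commute)
  finally show ?thesis .
qed

lemma grad_works:
  fixes f :: "real^'n \<Rightarrow> real"
  assumes "f differentiable (at x)"
  shows "(f has_derivative (\<lambda>h. grad f x \<bullet> h)) (at x)"
proof -
  have d: "(f has_derivative frechet_derivative f (at x)) (at x)"
    using assms frechet_derivative_works by blast
  have "linear (frechet_derivative f (at x))"
    using d has_derivative_linear by blast
  then have "frechet_derivative f (at x) = (\<lambda>h. grad f x \<bullet> h)"
    unfolding grad_def using linear_vec_expand by blast
  with d show ?thesis by simp
qed

lemma vec_has_derivative_comp: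
  fixes F :: "'a::real_normed_vector \<Rightarrow> real^'n"
  assumes "\<And>i. ((\<lambda>y. F y $ i) has_derivative (\<lambda>h. F' h $ i)) (at x)"
  shows "(F has_derivative F') (at x)"
  using assms
  by (subst has_derivative_componentwise_within) (auto simp: Basis_vec_def cart_eq_inner_axis)

lemma div_formula:
  fixes P :: "real^'n \<Rightarrow> real^'n" and x :: "real^'n"
  assumes dP: "\<And>i. (\<lambda>y. P y $ i) differentiable (at x)"
  shows "sqrt (1 + (norm (P x))\<^sup>2) * divergence (\<lambda>y. P y /\<^sub>R sqrt (1 + (norm (P y))\<^sup>2)) x
     = (\<Sum>a\<in>UNIV. \<Sum>b\<in>UNIV. ((if a = b then 1 else 0)
          - (P x $ a / sqrt (1 + (norm (P x))\<^sup>2)) * (P x $ b / sqrt (1 + (norm (P x))\<^sup>2)))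
          * grad (\<lambda>y. P y $ a) x $ b)"
proof -
  define H where "H a b = grad (\<lambda>y. P y $ a) x $ b" for a b
  define P' where "P' h = (\<chi> k. grad (\<lambda>y. P y $ k) x \<bullet> h)" for h
  have dP': "(P has_derivative P') (at x)"
    unfolding P'_def by (rule vec_has_derivative_comp) (simp add: grad_works[OF dP])
  define S where "S y = sqrt (1 + P y \<bullet> P y)" for y
  define W where "W = S x"
  have W1: "W \<ge> 1" unfolding W_def S_def by simp
  have Wpos: "W > 0" using W1 by simp
  have dN: "((\<lambda>y. 1 + P y \<bullet> P y) has_derivative (\<lambda>h. 2 * (P x \<bullet> P' h))) (at x)"
    apply (rule derivative_eq_intros refl dP')+
    apply (simp add: inner_commute)
    done
  have dS: "(S has_derivative (\<lambda>h. (P x \<bullet> P' h) / W)) (at x)"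
    unfolding S_def W_def
    apply (rule derivative_eq_intros)
      apply (simp add: add_pos_nonneg)
     apply (rule dN)
    apply (simp add: field_simps)
    done
  define F' where "F' h = inverse W *\<^sub>R P' h - ((P x \<bullet> P' h) / W^3) *\<^sub>R P x" for h
  have Feq: "(\<lambda>y. P y /\<^sub>R sqrt (1 + (norm (P y))\<^sup>2)) = (\<lambda>y. inverse (S y) *\<^sub>R P y)"
    by (auto simp: S_def power2_norm_eq_inner)
  have dF: "((\<lambda>y. inverse (S y) *\<^sub>R P y) has_derivative F') (at x)"
    apply (rule derivative_eq_intros)
        apply (rule derivative_eq_intros)
    using Wpos apply (simp add: W_def)
          apply (rule dS)
        apply (rule refl)
      apply (rule dP')
    apply (rule ext)
    apply (simp add: F'_def W_def[symmetric] power3_eq_cube field_simps)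
    done
  have Pax: "P' (axis i 1) $ k = H k i" for i k
    by (simp add: P'_def H_def inner_axis)
  have div: "divergence (\<lambda>y. P y /\<^sub>R sqrt (1 + (norm (P y))\<^sup>2)) x
      = (\<Sum>i\<in>UNIV. H i i / W - (\<Sum>k\<in>UNIV. P x $ k * H k i) / W^3 * P x $ i)"
    unfolding divergence_def Feq frechet_derivative_at[OF dF, symmetric]
    by (simp add: F'_def Pax inner_vec_def field_simps)
  have Wsq: "sqrt (1 + (norm (P x))\<^sup>2) = W" by (simp add: W_def S_def power2_norm_eq_inner)
  have L: "W * (\<Sum>i\<in>UNIV. H i i / W - (\<Sum>k\<in>UNIV. P x $ k * H k i) / W^3 * P x $ i)
     = (\<Sum>i\<in>UNIV. H i i) - (\<Sum>i\<in>UNIV. \<Sum>k\<in>UNIV. P x $ k * P x $ i * H k i) / W^2"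
  proof -
    have "W * (\<Sum>i\<in>UNIV. H i i / W - (\<Sum>k\<in>UNIV. P x $ k * H k i) / W^3 * P x $ i)
        = (\<Sum>i\<in>UNIV. H i i - (\<Sum>k\<in>UNIV. P x $ k * P x $ i * H k i) / W^2)"
      unfolding sum_distrib_left
    proof (rule sum.cong[OF refl])
      fix i
      have "(\<Sum>k\<in>UNIV. P x $ k * H k i) * P x $ i = (\<Sum>k\<in>UNIV. P x $ k * P x $ i * H k i)"
        by (simp add: sum_distrib_right sum_distrib_left mult_ac)
      then show "W * (H i i / W - (\<Sum>k\<in>UNIV. P x $ k * H k i) / W ^ 3 * P x $ i)
          = H i i - (\<Sum>k\<in>UNIV. P x $ k * P x $ i * H k i) / W\<^sup>2"
        using Wpos by (simp add: power3_eq_cube power2_eq_square field_simps)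
    qed
    then show ?thesis by (simp add: sum_subtractf sum_divide_distrib)
  qed
  have R: "(\<Sum>a\<in>UNIV. \<Sum>b\<in>UNIV. ((if a = b then 1 else 0) - (P x $ a / W) * (P x $ b / W)) * H a b)
     = (\<Sum>a\<in>UNIV. H a a) - (\<Sum>a\<in>UNIV. \<Sum>b\<in>UNIV. P x $ a * P x $ b * H a b) / W^2"
  proof -
    have "(\<Sum>b\<in>UNIV. ((if a = b then 1 else 0) - (P x $ a / W) * (P x $ b / W)) * H a b)
        = H a a - (\<Sum>b\<in>UNIV. P x $ a * P x $ b * H a b) / W^2" for a
    proof -
      have "(\<Sum>b\<in>UNIV. ((if a = b then 1 else 0) - (P x $ a / W) * (P x $ b / W)) * H a b)
          = (\<Sum>b\<in>UNIV. (if a = b then H a b else 0)) - (\<Sum>b\<in>UNIV. P x $ a * P x $ b * H a b / W^2)"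
        unfolding sum_subtractf[symmetric]
        by (rule sum.cong) (auto simp: power2_eq_square field_simps)
      then show ?thesis by (simp add: sum_divide_distrib)
    qed
    then show ?thesis by (simp add: sum_subtractf sum_divide_distrib)
  qed
  have sw: "(\<Sum>i\<in>UNIV. \<Sum>k\<in>UNIV. P x $ k * P x $ i * H k i) = (\<Sum>a\<in>UNIV. \<Sum>b\<in>UNIV. P x $ a * P x $ b * H a b)"
    by (rule sum.swap)
  show ?thesis
    unfolding Wsq div L H_def[symmetric] R sw ..
qed

lemma trace_decomp:
  fixes K :: "'n::finite \<Rightarrow> 'n \<Rightarrow> real" and q :: "real^'n"
  assumes q1: "norm q < 1" and nsd: "\<And>w::real^'n. (\<Sum>a\<in>UNIV. \<Sum>b\<in>UNIV. w$a * w$b * K a b) \<le> 0"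
  shows "(\<Sum>a\<in>UNIV. \<Sum>b\<in>UNIV. ((if a=b then 1 else 0) - q$a * q$b) * K a b) \<le> 0"
proof -
  define s where "s = (\<Sum>i\<in>UNIV. q$i * q$i)"
  have s: "s = (norm q)^2" by (simp add: s_def power2_norm_eq_inner inner_vec_def)
  have s0: "0 \<le> s" "s < 1" using q1 s by (simp_all add: abs_square_less_1)
  define r where "r = sqrt (1 - s)"
  have r0: "r \<ge> 0" and rr: "r*r = 1 - s" using s0 by (simp_all add: r_def)
  define cc where "cc = 1 / (1 + r)"
  have cc: "2*cc - cc*cc * s = 1"
  proof -
    have e: "(1+r)*cc = 1" using r0 by (simp add: cc_def)
    have e2: "cc = cc*cc*(1+r)" using e by (metis mult.assoc mult.commute mult.right_neutral)
    have "2*cc - cc*cc * s = cc*cc*(2*(1+r) - s)" by (subst (1) e2) (simp add: algebra_simps)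
    also have "\<dots> = ((1+r)*cc)*((1+r)*cc)"
    proof -
      have "cc*cc*(2*(1+r) - s) - ((1+r)*cc)*((1+r)*cc) = cc*cc*(1 - s - r*r)"
        by (simp add: algebra_simps)
      also have "\<dots> = 0" using rr by simp
      finally show ?thesis by simp
    qed
    finally show ?thesis using e by simp
  qed
  define w where "w i = (\<chi> a. (if a = i then 1 else 0) - cc * q$i * q$a)" for i
  have key: "(\<Sum>i\<in>UNIV. w i $ a * w i $ b) = (if a=b then 1 else 0) - q$a * q$b" for a b
  proof -
    have "(\<Sum>i\<in>UNIV. w i $ a * w i $ b) = (\<Sum>i\<in>UNIV. (if a = i \<and> b = i then 1 else 0)
          - cc * q$a * (if i = b then q$i else 0) - cc * q$b * (if i = a then q$i else 0)
          + cc*cc*q$a*q$b * (q$i*q$i))"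
      by (rule sum.cong) (auto simp: w_def algebra_simps)
    moreover have "(\<Sum>i\<in>UNIV. if a = i \<and> b = i then 1 else (0::real)) = (if a=b then 1 else 0)"
      by (cases "a=b") (auto intro: sum.neutral)
    ultimately have "(\<Sum>i\<in>UNIV. w i $ a * w i $ b) = (if a=b then 1 else 0) - 2*cc*q$a*q$b + cc*cc*q$a*q$b * s"
      by (simp add: sum.distrib sum_subtractf sum_distrib_left[symmetric] s_def)
    also have "\<dots> = (if a=b then 1 else 0) - q$a*q$b * (2*cc - cc*cc * s)" by (simp add: algebra_simps)
    finally show ?thesis using cc by simp
  qed
  have "(\<Sum>a\<in>UNIV. \<Sum>b\<in>UNIV. ((if a=b then 1 else 0) - q$a * q$b) * K a b)
      = (\<Sum>a\<in>UNIV. \<Sum>b\<in>UNIV. \<Sum>i\<in>UNIV. w i $ a * w i $ b * K a b)"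
    by (simp add: key[symmetric] sum_distrib_right)
  also have "\<dots> = (\<Sum>a\<in>UNIV. \<Sum>i\<in>UNIV. \<Sum>b\<in>UNIV. w i $ a * w i $ b * K a b)"
    by (rule sum.cong[OF refl], rule sum.swap)
  also have "\<dots> = (\<Sum>i\<in>UNIV. \<Sum>a\<in>UNIV. \<Sum>b\<in>UNIV. w i $ a * w i $ b * K a b)"
    by (rule sum.swap)
  also have "\<dots> \<le> 0" by (rule sum_nonpos) (rule nsd)
  finally show ?thesis .
qed

lemma deriv_left_max:
  fixes g :: "real \<Rightarrow> real"
  assumes "(g has_real_derivative l) (at t)" "a < t" "\<And>s. a \<le> s \<Longrightarrow> s \<le> t \<Longrightarrow> g s \<le> g t"
  shows "l \<ge> 0"
proof (rule ccontr)
  assume "\<not> l \<ge> 0"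
  then have "l < 0" by simp
  from DERIV_neg_dec_left[OF assms(1) this] obtain d where d: "d > 0" "\<And>h. h > 0 \<Longrightarrow> h < d \<Longrightarrow> g t < g (t - h)"
    by blast
  define h where "h = min (d/2) (t - a)"
  have "h > 0" "h < d" using d assms(2) by (auto simp: h_def)
  then have "g t < g (t - h)" using d by blast
  moreover have "g (t - h) \<le> g t" using assms(3)[of "t-h"] \<open>h>0\<close> by (auto simp: h_def)
  ultimately show False by simp
qed

lemma second_deriv_max:
  fixes \<phi> \<phi>' :: "real \<Rightarrow> real"
  assumes eta: "\<eta> > 0"
    and d1: "\<And>s. \<bar>s\<bar> < \<eta> \<Longrightarrow> (\<phi> has_real_derivative \<phi>' s) (at s)"
    and z: "\<phi>' 0 = 0" and d2: "(\<phi>' has_real_derivative d) (at 0)"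
    and mx: "\<And>s. \<bar>s\<bar> < \<eta> \<Longrightarrow> \<phi> s \<le> \<phi> 0"
  shows "d \<le> 0"
proof (rule ccontr)
  assume "\<not> d \<le> 0"
  then have "d > 0" by simp
  from DERIV_pos_inc_right[OF d2 this] obtain e where e: "e > 0" "\<And>h. h > 0 \<Longrightarrow> h < e \<Longrightarrow> \<phi>' 0 < \<phi>' (0 + h)"
    by blast
  define h where "h = min e \<eta> / 2"
  have h: "h > 0" "h < e" "h < \<eta>" using e eta by (auto simp: h_def)
  have cont: "continuous_on {0..h} \<phi>"
    by (rule DERIV_continuous_on[where D=\<phi>']) (use d1 h in \<open>auto intro: has_field_derivative_at_within\<close>)
  obtain l z where lz: "0 < z" "z < h" "(\<phi> has_real_derivative l) (at z)" "\<phi> h - \<phi> 0 = (h - 0) * l"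
    using MVT[OF h(1) cont] d1 h real_differentiable_def
    by (smt (verit, ccfv_SIG) greaterThanLessThan_iff)
  have "l = \<phi>' z" using DERIV_unique[OF lz(3) d1[of z]] lz h by simp
  moreover have "\<phi>' z > 0" using e(2)[of z] lz h z by simp
  ultimately have "h * l > 0" using h by simp
  then have "\<phi> h > \<phi> 0" using lz by simp
  moreover have "\<phi> h \<le> \<phi> 0" using mx[of h] h by simp
  ultimately show False by simp
qed

lemma line_deriv:
  fixes F :: "real^'n \<Rightarrow> real"
  assumes "(F has_derivative (\<lambda>h. gv \<bullet> h)) (at (x + s *\<^sub>R w))"
  shows "((\<lambda>s. F (x + s *\<^sub>R w)) has_real_derivative (gv \<bullet> w)) (at s)"
proof -
  have "((\<lambda>s. x + s *\<^sub>R w) has_derivative (\<lambda>h. h *\<^sub>R w)) (at s)"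
    by (rule derivative_eq_intros refl)+ simp
  from has_derivative_compose[OF this assms]
  have "((\<lambda>s. F (x + s *\<^sub>R w)) has_derivative (\<lambda>h. gv \<bullet> (h *\<^sub>R w))) (at s)" by (simp add: o_def)
  then show ?thesis
    by (simp add: has_field_derivative_def mult.commute[of _ "gv \<bullet> w"])
qed

lemma interior_case:
  fixes \<Omega> :: "(real^'n) set" and u :: "(real^'n) \<times> real \<Rightarrow> real" and \<rho> :: "real^'n \<Rightarrow> real"
    and fv :: "(real^'n) \<times> real"
  assumes op: "open \<Omega>" and x1: "x1 \<in> \<Omega>" and t1: "0 < t1"
    and dU: "\<And>y. y \<in> \<Omega> \<Longrightarrow> (\<lambda>y. u (y,t1)) differentiable (at y)"
    and dT: "(\<lambda>s. u (x1,s)) differentiable (at t1)"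
    and dP: "\<And>i. (\<lambda>y. dx u (y,t1) $ i) differentiable (at x1)"
    and drho: "\<And>y. \<rho> differentiable (at y)"
    and drhoi: "\<And>i y. (\<lambda>y. grad \<rho> y $ i) differentiable (at y)"
    and mxx: "\<And>y. y \<in> \<Omega> \<Longrightarrow> \<sigma>*u(y,t1) - \<epsilon>*\<rho> y \<le> \<sigma>*u(x1,t1) - \<epsilon>*\<rho> x1"
    and mxt: "\<And>s. 0 \<le> s \<Longrightarrow> s \<le> t1 \<Longrightarrow> \<sigma>*u(x1,s) - (M+\<delta>) * s \<le> \<sigma>*u(x1,t1) - (M+\<delta>)*t1"
    and pde: "dt u (x1,t1) / sqrt (1 + (norm (dx u (x1,t1)))\<^sup>2)
       = divergence (\<lambda>y. dx u (y,t1) /\<^sub>R sqrt (1 + (norm (dx u (y,t1)))\<^sup>2)) x1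
         + fv \<bullet> ((- dx u (x1,t1), 1) /\<^sub>R sqrt (1 + (norm (dx u (x1,t1)))\<^sup>2))"
    and fM: "norm fv \<le> M" and M0: "M \<ge> 0"
    and G: "norm (grad \<rho> x1) \<le> G"
    and C: "\<And>a b. \<bar>grad (\<lambda>y. grad \<rho> y $ a) x1 $ b\<bar> \<le> C"
    and sig: "\<sigma>*\<sigma> = 1" and eps: "\<epsilon> > 0"
  shows "\<delta> \<le> \<epsilon> * (2*C*CARD('n)^2 + M*G)"
proof -
  define p where "p = dx u (x1,t1)"
  define g where "g = grad \<rho> x1"
  have dxU: "dx u (y,t) = grad (\<lambda>y. u (y,t)) y" for y t by (simp add: dx_def)
  have tder: "\<sigma> * dt u (x1,t1) \<ge> M + \<delta>"
  proof -
    have "((\<lambda>s. u (x1,s)) has_real_derivative dt u (x1,t1)) (at t1)"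
      using dT by (simp add: dt_def DERIV_deriv_iff_real_differentiable)
    then have "((\<lambda>s. \<sigma>*u(x1,s) - (M+\<delta>) * s) has_real_derivative \<sigma> * dt u (x1,t1) - (M+\<delta>)) (at t1)"
      by (auto intro!: derivative_eq_intros)
    from deriv_left_max[OF this t1] mxt show ?thesis by simp
  qed
  have hV: "((\<lambda>y. \<sigma>*u(y,t1) - \<epsilon>*\<rho> y) has_derivative (\<lambda>h. (\<sigma> *\<^sub>R dx u (y,t1) - \<epsilon> *\<^sub>R grad \<rho> y) \<bullet> h)) (at y)"
    if "y \<in> \<Omega>" for y
  proof -
    have a: "((\<lambda>y. u(y,t1)) has_derivative (\<lambda>h. dx u (y,t1) \<bullet> h)) (at y)"
      unfolding dxU by (rule grad_works[OF dU[OF that]])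
    have b: "(\<rho> has_derivative (\<lambda>h. grad \<rho> y \<bullet> h)) (at y)" by (rule grad_works[OF drho])
    show ?thesis
      by (rule derivative_eq_intros a b refl)+ (simp add: inner_diff_left algebra_simps)
  qed
  have "(\<lambda>h. (\<sigma> *\<^sub>R p - \<epsilon> *\<^sub>R g) \<bullet> h) = (\<lambda>h. 0)"
    using differential_zero_maxmin[OF x1 op hV[OF x1]] mxx unfolding p_def g_def by blast
  then have "(\<sigma> *\<^sub>R p - \<epsilon> *\<^sub>R g) \<bullet> (\<sigma> *\<^sub>R p - \<epsilon> *\<^sub>R g) = 0" by metis
  then have grad0: "\<sigma> *\<^sub>R p = \<epsilon> *\<^sub>R g" by simp
  then have pg: "p = (\<sigma>*\<epsilon>) *\<^sub>R g"
    by (metis (no_types, lifting) mult_cancel_right1 scaleR_one scaleR_scaleR sig mult.commute)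
  have normp: "norm p \<le> \<epsilon> * G"
  proof -
    have "\<sigma>^2 = 1" using sig by (simp add: power2_eq_square)
    then have "\<sigma> = 1 \<or> \<sigma> = -1" by (simp add: power2_eq_1_iff)
    then have "\<bar>\<sigma>*\<epsilon>\<bar> = \<epsilon>" using eps by auto
    then have "norm p = \<epsilon> * norm g" using pg by simp
    then show ?thesis using G eps unfolding g_def by (simp add: mult_left_mono)
  qed
  define H where "H a b = grad (\<lambda>y. dx u (y,t1) $ a) x1 $ b" for a b
  define Rh where "Rh a b = grad (\<lambda>y. grad \<rho> y $ a) x1 $ b" for a b
  define K where "K a b = \<sigma> * H a b - \<epsilon> * Rh a b" for a b
  have nsd: "(\<Sum>a\<in>UNIV. \<Sum>b\<in>UNIV. w$a * w$b * K a b) \<le> 0" for w :: "real^'n"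
  proof -
    obtain \<eta> where eta: "\<eta> > 0" "ball x1 \<eta> \<subseteq> \<Omega>" using op x1 open_contains_ball by blast
    define \<eta>' where "\<eta>' = \<eta> / (norm w + 1)"
    have eta': "\<eta>' > 0" unfolding \<eta>'_def using eta norm_ge_zero[of w] by (intro divide_pos_pos) linarith+
    have inO: "x1 + r *\<^sub>R w \<in> \<Omega>" if "\<bar>r\<bar> < \<eta>'" for r
    proof -
      have "\<bar>r\<bar> * norm w \<le> \<bar>r\<bar> * (norm w + 1)" by (simp add: mult_left_mono)
      also have "\<dots> < \<eta>"
      proof -
        have "norm w + 1 > 0" using norm_ge_zero[of w] by linarith
        then show ?thesis using that unfolding \<eta>'_def by (simp add: pos_less_divide_eq)
      qed
      finally have "dist x1 (x1 + r *\<^sub>R w) < \<eta>" by (simp add: dist_norm)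
      then show ?thesis using eta by auto
    qed
    define \<Phi> where "\<Phi> y = (\<sigma> *\<^sub>R dx u (y,t1) - \<epsilon> *\<^sub>R grad \<rho> y) \<bullet> w" for y
    define hv where "hv = (\<chi> b. \<Sum>a\<in>UNIV. w$a * K a b)"
    have dPhi: "(\<Phi> has_derivative (\<lambda>h. hv \<bullet> h)) (at x1)"
    proof -
      have e: "\<Phi> = (\<lambda>y. \<Sum>a\<in>UNIV. w$a * (\<sigma> * dx u (y,t1) $ a - \<epsilon> * grad \<rho> y $ a))"
        by (auto simp: \<Phi>_def inner_vec_def algebra_simps)
      have "(\<Phi> has_derivative (\<lambda>h. \<Sum>a\<in>UNIV. w$a * (\<sigma> * (grad (\<lambda>y. dx u (y,t1) $ a) x1 \<bullet> h)
               - \<epsilon> * (grad (\<lambda>y. grad \<rho> y $ a) x1 \<bullet> h)))) (at x1)"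
        unfolding e
        by (rule derivative_eq_intros grad_works dP drhoi refl)+
      moreover have "(\<lambda>h. \<Sum>a\<in>UNIV. w$a * (\<sigma> * (grad (\<lambda>y. dx u (y,t1) $ a) x1 \<bullet> h)
               - \<epsilon> * (grad (\<lambda>y. grad \<rho> y $ a) x1 \<bullet> h))) = (\<lambda>h. hv \<bullet> h)"
      proof
        fix h
        have "(\<Sum>a\<in>UNIV. w$a * (\<sigma> * (grad (\<lambda>y. dx u (y,t1) $ a) x1 \<bullet> h)
               - \<epsilon> * (grad (\<lambda>y. grad \<rho> y $ a) x1 \<bullet> h)))
            = (\<Sum>a\<in>UNIV. \<Sum>b\<in>UNIV. w$a * K a b * h$b)"
        proof (rule sum.cong[OF refl])
          fix a
          have "(\<Sum>b\<in>UNIV. w$a * K a b * h$b) = w$a * (\<sigma> * (\<Sum>b\<in>UNIV. H a b * h$b) - \<epsilon> * (\<Sum>b\<in>UNIV. Rh a b * h$b))"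
            unfolding sum_distrib_left sum_subtractf[symmetric] K_def
            by (rule sum.cong[OF refl]) (simp add: algebra_simps)
          then show "w$a * (\<sigma> * (grad (\<lambda>y. dx u (y,t1) $ a) x1 \<bullet> h)
               - \<epsilon> * (grad (\<lambda>y. grad \<rho> y $ a) x1 \<bullet> h)) = (\<Sum>b\<in>UNIV. w$a * K a b * h$b)"
            unfolding inner_vec_def H_def Rh_def inner_real_def by (simp only: mult.commute)
        qed
        also have "\<dots> = (\<Sum>b\<in>UNIV. \<Sum>a\<in>UNIV. w$a * K a b * h$b)" by (rule sum.swap)
        also have "\<dots> = hv \<bullet> h" by (simp add: hv_def inner_vec_def sum_distrib_right)
        finally show "(\<Sum>a\<in>UNIV. w$a * (\<sigma> * (grad (\<lambda>y. dx u (y,t1) $ a) x1 \<bullet> h)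
               - \<epsilon> * (grad (\<lambda>y. grad \<rho> y $ a) x1 \<bullet> h))) = hv \<bullet> h" .
      qed
      ultimately show ?thesis by simp
    qed
    have "hv \<bullet> w \<le> 0"
    proof (rule second_deriv_max[OF eta'])
      fix r :: real assume r: "\<bar>r\<bar> < \<eta>'"
      show "((\<lambda>r. \<sigma>*u(x1 + r *\<^sub>R w,t1) - \<epsilon>*\<rho> (x1 + r *\<^sub>R w)) has_real_derivative \<Phi> (x1 + r *\<^sub>R w)) (at r)"
        unfolding \<Phi>_def by (rule line_deriv, rule hV[OF inO[OF r]])
      show "\<sigma>*u(x1 + r *\<^sub>R w,t1) - \<epsilon>*\<rho> (x1 + r *\<^sub>R w) \<le> \<sigma>*u(x1 + 0 *\<^sub>R w,t1) - \<epsilon>*\<rho> (x1 + 0 *\<^sub>R w)"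
        using mxx[OF inO[OF r]] by simp
    next
      show "\<Phi> (x1 + 0 *\<^sub>R w) = 0" using grad0 by (simp add: \<Phi>_def p_def g_def)
      show "((\<lambda>r. \<Phi> (x1 + r *\<^sub>R w)) has_real_derivative hv \<bullet> w) (at 0)"
        by (rule line_deriv) (simp add: dPhi)
    qed
    moreover have "hv \<bullet> w = (\<Sum>a\<in>UNIV. \<Sum>b\<in>UNIV. w$a * w$b * K a b)"
    proof -
      have "hv \<bullet> w = (\<Sum>b\<in>UNIV. \<Sum>a\<in>UNIV. w$a * w$b * K a b)"
        by (simp add: hv_def inner_vec_def sum_distrib_left mult_ac)
      also have "\<dots> = (\<Sum>a\<in>UNIV. \<Sum>b\<in>UNIV. w$a * w$b * K a b)" by (rule sum.swap)
      finally show ?thesis .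
    qed
    ultimately show ?thesis by simp
  qed
  have sg: "\<sigma> = 1 \<or> \<sigma> = -1"
  proof -
    have "\<sigma>^2 = 1" using sig by (simp add: power2_eq_square)
    then show ?thesis by (simp add: power2_eq_1_iff)
  qed
  define W where "W = sqrt (1 + (norm p)\<^sup>2)"
  have W1: "W \<ge> 1" unfolding W_def by simp
  have Wpos: "W > 0" using W1 by simp
  have Wle: "W \<le> 1 + norm p"
  proof -
    have "1 + (norm p)\<^sup>2 \<le> (1 + norm p)\<^sup>2" by (simp add: power2_eq_square algebra_simps)
    then have "W \<le> sqrt ((1 + norm p)\<^sup>2)" unfolding W_def by (rule real_sqrt_le_mono)
    then show ?thesis by simp
  qed
  have pW: "norm p < W"
  proof -
    have "(norm p)\<^sup>2 < 1 + (norm p)\<^sup>2" by simp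
    then have "sqrt ((norm p)\<^sup>2) < W" unfolding W_def by (rule real_sqrt_less_mono)
    then show ?thesis by simp
  qed
  define q where "q = p /\<^sub>R W"
  have qa: "p$a / W = q$a" for a by (simp add: q_def divide_inverse mult.commute)
  have nq: "norm q < 1"
  proof -
    have "norm q = norm p / W" using Wpos by (simp add: q_def divide_inverse mult.commute)
    then show ?thesis using pW Wpos by simp
  qed
  note divf0 = div_formula[OF dP, folded p_def W_def H_def]
  have divf: "W * divergence (\<lambda>y. dx u (y,t1) /\<^sub>R sqrt (1 + (norm (dx u (y,t1)))\<^sup>2)) x1
      = (\<Sum>a\<in>UNIV. \<Sum>b\<in>UNIV. ((if a = b then 1 else 0) - q$a * q$b) * H a b)"
    using divf0 unfolding W_def[symmetric] qa .
  define A where "A a b = (if a = b then 1 else 0) - q$a * q$b" for a b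
  have trK: "(\<Sum>a\<in>UNIV. \<Sum>b\<in>UNIV. A a b * K a b) \<le> 0"
    unfolding A_def by (rule trace_decomp[OF nq nsd])
  have Abd: "\<bar>A a b\<bar> \<le> 2" for a b
  proof -
    have "\<bar>q$a\<bar> \<le> 1" "\<bar>q$b\<bar> \<le> 1" using component_le_norm_cart[of q] nq by (meson less_imp_le order_trans)+
    then have "\<bar>q$a * q$b\<bar> \<le> 1" by (simp add: abs_mult mult_le_one)
    then show ?thesis unfolding A_def by (auto simp: abs_le_iff)
  qed
  have ARh: "(\<Sum>a\<in>UNIV. \<Sum>b\<in>UNIV. A a b * Rh a b) \<le> 2*C*CARD('n)^2"
  proof -
    have "A a b * Rh a b \<le> 2 * C" for a b
    proof -
      have "A a b * Rh a b \<le> \<bar>A a b\<bar> * \<bar>Rh a b\<bar>" by (metis abs_ge_self abs_mult)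
      also have "\<dots> \<le> 2 * C" using Abd[of a b] C[of a b] unfolding Rh_def
        by (intro mult_mono) auto
      finally show ?thesis .
    qed
    then have "(\<Sum>a\<in>UNIV. \<Sum>b\<in>UNIV. A a b * Rh a b) \<le> (\<Sum>a\<in>(UNIV::'n set). \<Sum>b\<in>(UNIV::'n set). 2 * C)"
      by (meson sum_mono)
    also have "\<dots> = 2*C*CARD('n)^2" by (simp add: power2_eq_square)
    finally show ?thesis .
  qed
  have AK: "(\<Sum>a\<in>UNIV. \<Sum>b\<in>UNIV. A a b * K a b)
     = \<sigma> * (\<Sum>a\<in>UNIV. \<Sum>b\<in>UNIV. A a b * H a b) - \<epsilon> * (\<Sum>a\<in>UNIV. \<Sum>b\<in>UNIV. A a b * Rh a b)"
    by (simp add: K_def sum_distrib_left sum_subtractf algebra_simps)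
  have divpart: "\<sigma> * (W * divergence (\<lambda>y. dx u (y,t1) /\<^sub>R sqrt (1 + (norm (dx u (y,t1)))\<^sup>2)) x1)
      \<le> \<epsilon> * (2*C*CARD('n)^2)"
  proof -
    have "\<sigma> * (W * divergence (\<lambda>y. dx u (y,t1) /\<^sub>R sqrt (1 + (norm (dx u (y,t1)))\<^sup>2)) x1)
       = (\<Sum>a\<in>UNIV. \<Sum>b\<in>UNIV. A a b * K a b) + \<epsilon> * (\<Sum>a\<in>UNIV. \<Sum>b\<in>UNIV. A a b * Rh a b)"
    proof -
      have divA: "W * divergence (\<lambda>y. dx u (y,t1) /\<^sub>R sqrt (1 + (norm (dx u (y,t1)))\<^sup>2)) x1
          = (\<Sum>a\<in>UNIV. \<Sum>b\<in>UNIV. A a b * H a b)" using divf unfolding A_def .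
      show ?thesis unfolding divA AK by simp
    qed
    also have "\<dots> \<le> \<epsilon> * (2*C*CARD('n)^2)"
      using trK ARh eps by (smt (verit) mult_left_mono)
    finally show ?thesis .
  qed
  have pde2: "dt u (x1,t1) = W * divergence (\<lambda>y. dx u (y,t1) /\<^sub>R sqrt (1 + (norm (dx u (y,t1)))\<^sup>2)) x1
      + fv \<bullet> (- p, 1)"
  proof -
    have "dt u (x1,t1) / W = divergence (\<lambda>y. dx u (y,t1) /\<^sub>R sqrt (1 + (norm (dx u (y,t1)))\<^sup>2)) x1
       + (fv \<bullet> (- p, 1)) / W"
    proof -
      have e: "fv \<bullet> ((- p, 1) /\<^sub>R W) = (fv \<bullet> (- p, 1)) / W"
        by (simp only: inner_scaleR_right divide_inverse mult.commute)
      show ?thesis using pde unfolding p_def[symmetric] W_def[symmetric] e .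
    qed
    then show ?thesis using Wpos by (simp add: field_simps)
  qed
  have fpart: "\<sigma> * (fv \<bullet> (- p, 1)) \<le> M * (1 + \<epsilon> * G)"
  proof -
    have "\<sigma> * (fv \<bullet> (- p, 1)) \<le> \<bar>fv \<bullet> (- p, 1)\<bar>" using sg by auto
    also have "\<dots> \<le> norm fv * norm (- p, 1::real)" by (rule Cauchy_Schwarz_ineq2)
    also have "norm (- p, 1::real) = W" by (simp add: norm_Pair W_def add.commute)
    also have "norm fv * W \<le> M * W" using fM Wpos by (simp add: mult_right_mono)
    also have "\<dots> \<le> M * (1 + \<epsilon> * G)" using Wle normp M0 by (intro mult_left_mono) auto
    finally show ?thesis .
  qed
  have "M + \<delta> \<le> \<sigma> * dt u (x1,t1)" by (rule tder)
  also have "\<dots> = \<sigma> * (W * divergence (\<lambda>y. dx u (y,t1) /\<^sub>R sqrt (1 + (norm (dx u (y,t1)))\<^sup>2)) x1)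
      + \<sigma> * (fv \<bullet> (- p, 1))" unfolding pde2 by (simp add: algebra_simps)
  also have "\<dots> \<le> \<epsilon> * (2*C*CARD('n)^2) + M * (1 + \<epsilon> * G)" using divpart fpart by simp
  finally show ?thesis by (simp add: algebra_simps)
qed

lemma boundary_case:
  fixes \<Omega> :: "(real^'n) set" and u :: "(real^'n) \<times> real \<Rightarrow> real" and \<rho> :: "real^'n \<Rightarrow> real"
    and Du :: "(real^'n) \<times> real \<Rightarrow> real^'n"
  assumes op: "open \<Omega>" and Orho: "\<Omega> = {x. \<rho> x < 0}"
    and x1: "x1 \<in> closure \<Omega>" and rho0: "\<rho> x1 = 0"
    and drho: "\<And>y. \<rho> differentiable (at y)"
    and cgrho: "continuous_on UNIV (grad \<rho>)"
    and crho: "continuous_on UNIV \<rho>"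
    and dU: "\<And>y. y \<in> \<Omega> \<Longrightarrow> (\<lambda>y. u (y,t1)) differentiable (at y)"
    and uc: "continuous_on (closure \<Omega>) (\<lambda>y. u (y,t1))"
    and Duc: "continuous_on (closure \<Omega>) (\<lambda>y. Du (y,t1))"
    and Dueq: "\<And>y. y \<in> \<Omega> \<Longrightarrow> Du (y,t1) = dx u (y,t1)"
    and neu: "Du (x1,t1) \<bullet> grad \<rho> x1 = 0"
    and g0: "grad \<rho> x1 \<noteq> 0"
    and mx: "\<And>y. y \<in> closure \<Omega> \<Longrightarrow> \<sigma>*u(y,t1) - \<epsilon>*\<rho> y \<le> \<sigma>*u(x1,t1) - \<epsilon>*\<rho> x1"
    and eps: "\<epsilon> > 0"
  shows False
proof -
  define g where "g = grad \<rho> x1"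
  have dxU: "dx u (y,t) = grad (\<lambda>y. u (y,t)) y" for y t by (simp add: dx_def)
  define yy where "yy r = x1 + r *\<^sub>R (- g)" for r
  have D1: "((\<lambda>r. \<rho> (x1 + r *\<^sub>R (- g))) has_real_derivative (grad \<rho> x1 \<bullet> (- g))) (at 0)"
    by (rule line_deriv) (simp add: grad_works[OF drho])
  have D2: "grad \<rho> x1 \<bullet> (- g) < 0" using g0 unfolding g_def by simp
  obtain d1 where d1: "d1 > 0" "\<And>h. h > 0 \<Longrightarrow> h < d1 \<Longrightarrow> \<rho> (yy h) < 0"
    using DERIV_neg_dec_right[OF D1 D2] rho0 unfolding yy_def by force
  have inO: "yy h \<in> \<Omega>" if "h > 0" "h < d1" for h using d1 that Orho by auto
  define \<Phi> where "\<Phi> y = \<epsilon> * (grad \<rho> y \<bullet> g) - \<sigma> * (Du (y,t1) \<bullet> g)" for y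
  have cPhi: "continuous_on (closure \<Omega>) \<Phi>"
    unfolding \<Phi>_def
    by (intro continuous_intros continuous_on_subset[OF cgrho] Duc) auto
  have Phi1: "\<Phi> x1 > 0" using neu g0 eps by (simp add: \<Phi>_def g_def)
  obtain d2 where d2: "d2 > 0" "\<And>y. y \<in> closure \<Omega> \<Longrightarrow> dist y x1 < d2 \<Longrightarrow> dist (\<Phi> y) (\<Phi> x1) < \<Phi> x1"
    using cPhi x1 Phi1 unfolding continuous_on_iff by metis
  have Phipos: "\<Phi> y > 0" if "y \<in> closure \<Omega>" "dist y x1 < d2" for y
    using d2(2)[OF that] by (simp add: dist_real_def abs_less_iff)
  define h where "h = min d1 (d2 / (norm g + 1)) / 2"
  have ng: "norm g + 1 > 0" using norm_ge_zero[of g] by linarith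
  have h: "h > 0" "h < d1" "h * (norm g + 1) < d2"
  proof -
    define m where "m = min d1 (d2 / (norm g + 1))"
    have m: "m > 0" "m \<le> d1" "m \<le> d2 / (norm g + 1)" using d1 d2 ng by (auto simp: m_def)
    have hm: "h = m / 2" by (simp add: h_def m_def)
    show "h > 0" "h < d1" using m hm by auto
    have "m * (norm g + 1) \<le> d2" using m(3) ng by (simp add: le_divide_eq)
    moreover have "h*(norm g+1) = m*(norm g+1)/2" by (simp add: hm)
    ultimately show "h * (norm g + 1) < d2" using d2 by linarith
  qed
  define \<psi> where "\<psi> r = \<sigma>*u(yy r,t1) - \<epsilon>*\<rho> (yy r)" for r
  have yyc: "yy r \<in> closure \<Omega>" if "0 \<le> r" "r \<le> h" for r
  proof (cases "r = 0")
    case True then show ?thesis using x1 by (simp add: yy_def)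
  next
    case False then show ?thesis using inO[of r] that h closure_subset by force
  qed
  have cpsi: "continuous_on {0..h} \<psi>"
  proof -
    have c1: "continuous_on {0..h} yy" unfolding yy_def by (intro continuous_intros)
    have "continuous_on (closure \<Omega>) (\<lambda>y. \<sigma>*u(y,t1) - \<epsilon>*\<rho> y)"
      by (intro continuous_intros uc continuous_on_subset[OF crho]) auto
    moreover have "yy ` {0..h} \<subseteq> closure \<Omega>" using yyc by auto
    ultimately have "continuous_on {0..h} ((\<lambda>y. \<sigma>*u(y,t1) - \<epsilon>*\<rho> y) \<circ> yy)"
      using continuous_on_compose[OF c1] continuous_on_subset by blast
    then show ?thesis unfolding \<psi>_def o_def .
  qed
  have dpsi: "(\<psi> has_real_derivative \<Phi> (yy r)) (at r)" if "0 < r" "r < h" for r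
  proof -
    have yO: "yy r \<in> \<Omega>" using inO[of r] that h by simp
    have a: "((\<lambda>y. u(y,t1)) has_derivative (\<lambda>h. dx u (yy r,t1) \<bullet> h)) (at (yy r))"
      unfolding dxU by (rule grad_works[OF dU[OF yO]])
    have b: "(\<rho> has_derivative (\<lambda>h. grad \<rho> (yy r) \<bullet> h)) (at (yy r))" by (rule grad_works[OF drho])
    have "((\<lambda>y. \<sigma>*u(y,t1) - \<epsilon>*\<rho> y) has_derivative (\<lambda>h. (\<sigma> *\<^sub>R dx u (yy r,t1) - \<epsilon> *\<^sub>R grad \<rho> (yy r)) \<bullet> h)) (at (yy r))"
      by (rule derivative_eq_intros a b refl)+ (simp add: inner_diff_left algebra_simps)
    then have "((\<lambda>y. \<sigma>*u(y,t1) - \<epsilon>*\<rho> y) has_derivative (\<lambda>h. (\<sigma> *\<^sub>R dx u (yy r,t1) - \<epsilon> *\<^sub>R grad \<rho> (yy r)) \<bullet> h)) (at (x1 + r *\<^sub>R (- g)))"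
      by (simp add: yy_def)
    note line_deriv[OF this]
    then have "(\<psi> has_real_derivative (\<sigma> *\<^sub>R dx u (yy r,t1) - \<epsilon> *\<^sub>R grad \<rho> (yy r)) \<bullet> (- g)) (at r)"
      unfolding \<psi>_def[abs_def] yy_def .
    moreover have "(\<sigma> *\<^sub>R dx u (yy r,t1) - \<epsilon> *\<^sub>R grad \<rho> (yy r)) \<bullet> (- g) = \<Phi> (yy r)"
      using Dueq[OF yO] by (simp add: \<Phi>_def inner_diff_left algebra_simps)
    ultimately show ?thesis by simp
  qed
  obtain l z where lz: "0 < z" "z < h" "(\<psi> has_real_derivative l) (at z)" "\<psi> h - \<psi> 0 = (h - 0) * l"
  proof -
    have "\<psi> differentiable (at x)" if "0 < x" "x < h" for x
      using dpsi[OF that] real_differentiable_def by blast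
    from MVT[OF h(1) cpsi this] show ?thesis using that by blast
  qed
  have "l = \<Phi> (yy z)" using DERIV_unique[OF lz(3) dpsi[OF lz(1,2)]] .
  moreover have "\<Phi> (yy z) > 0"
  proof (rule Phipos)
    show "yy z \<in> closure \<Omega>" using yyc lz by simp
    have "dist (yy z) x1 = z * norm g" using lz by (simp add: yy_def dist_norm)
    also have "\<dots> \<le> h * (norm g + 1)" using lz by (intro mult_mono) auto
    also have "\<dots> < d2" by (rule h(3))
    finally show "dist (yy z) x1 < d2" .
  qed
  ultimately have "h * l > 0" using h by simp
  then have "\<psi> h > \<psi> 0" using lz by simp
  moreover have "\<psi> h \<le> \<psi> 0" using mx[OF yyc[of h]] h by (simp add: \<psi>_def yy_def)
  ultimately show False by simp
qed

lemma cont_bound: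
  fixes f :: "'a::metric_space \<Rightarrow> real"
  assumes "compact S" "continuous_on S f"
  shows "\<exists>B\<ge>0. \<forall>x\<in>S. \<bar>f x\<bar> \<le> B"
proof -
  have "bounded (f ` S)" using compact_continuous_image[OF assms(2,1)] compact_imp_bounded by blast
  then obtain B where "\<forall>y\<in>f ` S. norm y \<le> B" unfolding bounded_iff by blast
  then show ?thesis by (intro exI[of _ "max B 0"]) auto
qed

lemma cont_slice:
  fixes u :: "'a::topological_space \<times> 'b::topological_space \<Rightarrow> 'c::topological_space"
  assumes "continuous_on (A \<times> B) u" "s \<in> B"
  shows "continuous_on A (\<lambda>x. u (x,s))"
proof -
  have "continuous_on A (\<lambda>x. (x,s))" by (intro continuous_intros)
  moreover have "(\<lambda>x. (x,s)) ` A \<subseteq> A \<times> B" using assms(2) by auto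
  ultimately show ?thesis using continuous_on_compose2[OF assms(1)] by blast
qed

theorem mainTheorem5:
  fixes \<Omega> :: "(real^'n) set" and \<nu> :: "(real^'n) \<Rightarrow> (real^'n)"
    and f :: "(real^'n) \<Rightarrow> real \<Rightarrow> real \<Rightarrow> (real^'n) \<times> real"
    and u :: "(real^'n) \<times> real \<Rightarrow> real" and u0 :: "(real^'n) \<Rightarrow> real"
    and T :: real and Du :: "(real^'n) \<times> real \<Rightarrow> (real^'n)"
  assumes dom: "bounded \<Omega>" "connected \<Omega>" "\<Omega> \<noteq> {}"
    and bdry: "smooth_boundary_normal \<Omega> \<nu>"
    and f_cont: "continuous_on (\<Omega> \<times> UNIV \<times> {0..}) (\<lambda>(x,z,t). f x z t)"
    and f_bdd: "bounded ((\<lambda>(x,z,t). f x z t) ` (\<Omega> \<times> UNIV \<times> {0..}))"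
    and T: "T > 0"
    and reg: "C21_on (\<Omega> \<times> {0<..<T}) u"
    and u_cont: "continuous_on (closure \<Omega> \<times> {0..<T}) u"
    and Du_cont: "continuous_on (closure \<Omega> \<times> {0<..<T}) Du"
    and Du_ext: "\<forall>x\<in>\<Omega>. \<forall>t\<in>{0<..<T}. Du (x,t) = dx u (x,t)"
    and pde: "\<forall>x\<in>\<Omega>. \<forall>t\<in>{0<..<T}.
       dt u (x,t) / sqrt (1 + (norm (dx u (x,t)))\<^sup>2)
       = divergence (\<lambda>y. dx u (y,t) /\<^sub>R sqrt (1 + (norm (dx u (y,t)))\<^sup>2)) x
         + f x (u (x,t)) t \<bullet> ((- dx u (x,t), 1) /\<^sub>R sqrt (1 + (norm (dx u (x,t)))\<^sup>2))"
    and neumann: "\<forall>x\<in>frontier \<Omega>. \<forall>t\<in>{0<..<T}. Du (x,t) \<bullet> \<nu> x = 0"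
    and init: "\<forall>x\<in>\<Omega>. u (x,0) = u0 x"
  shows "\<forall>p\<in>\<Omega> \<times> {0<..<T}.
     \<bar>u p\<bar> \<le> (SUP q\<in>\<Omega> \<times> UNIV \<times> {0..T}. norm (case q of (x,z,t) \<Rightarrow> f x z t)) * T
              + (SUP x\<in>\<Omega>. \<bar>u0 x\<bar>)"
proof -
  obtain \<rho> where rs: "smooth_on UNIV \<rho>" and Orho: "\<Omega> = {x. \<rho> x < 0}"
    and gnz: "\<And>x. \<rho> x = 0 \<Longrightarrow> grad \<rho> x \<noteq> 0"
    and nu: "\<And>x. x \<in> frontier \<Omega> \<Longrightarrow> \<nu> x = grad \<rho> x /\<^sub>R norm (grad \<rho> x)"
    using bdry unfolding smooth_boundary_normal_def by blast
  have C2: "Ck_on (Suc (Suc 0)) \<rho> UNIV" using rs unfolding smooth_on_def by blast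
  have crho: "continuous_on UNIV \<rho>" and drho: "\<And>y. \<rho> differentiable (at y)"
    using C2 by auto
  have gi: "(\<lambda>y. grad \<rho> y $ i) = (\<lambda>x. frechet_derivative \<rho> (at x) (axis i 1))" for i
    by (simp add: grad_def)
  have cgi: "continuous_on UNIV (\<lambda>y. grad \<rho> y $ i)" and drhoi: "\<And>y. (\<lambda>y. grad \<rho> y $ i) differentiable (at y)"
    and chi: "\<And>j. continuous_on UNIV (\<lambda>x. frechet_derivative (\<lambda>y. grad \<rho> y $ i) (at x) (axis j 1))" for i
    unfolding gi using C2 by auto
  have cgrho: "continuous_on UNIV (grad \<rho>)"
  proof -
    have "continuous_on UNIV (\<lambda>y. \<chi> i. grad \<rho> y $ i)" by (intro continuous_on_vec_lambda cgi)
    then show ?thesis by simp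
  qed
  have cH: "continuous_on UNIV (\<lambda>x. grad (\<lambda>y. grad \<rho> y $ a) x $ b)" for a b
  proof -
    have "grad (\<lambda>y. grad \<rho> y $ a) x $ b = frechet_derivative (\<lambda>y. grad \<rho> y $ a) (at x) (axis b 1)" for x
      by (simp only: grad_def[of "\<lambda>y. grad \<rho> y $ a"] vec_lambda_beta)
    then show ?thesis using chi[of a b] by simp
  qed
  have op: "open \<Omega>" unfolding Orho by (rule open_Collect_less[OF crho continuous_on_const])
  have cl_le: "\<rho> x \<le> 0" if "x \<in> closure \<Omega>" for x
    using continuous_le_on_closure[OF continuous_on_subset[OF crho] that, of 0] Orho by auto
  have cpt: "compact (closure \<Omega>)" using dom(1) by (simp add: compact_closure)
  obtain R where R: "R \<ge> 0" "\<And>x. x \<in> closure \<Omega> \<Longrightarrow> \<bar>\<rho> x\<bar> \<le> R"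
    using cont_bound[OF cpt continuous_on_subset[OF crho]] by auto
  obtain G where G: "G \<ge> 0" "\<And>x. x \<in> closure \<Omega> \<Longrightarrow> \<bar>norm (grad \<rho> x)\<bar> \<le> G"
    using cont_bound[OF cpt, of "\<lambda>x. norm (grad \<rho> x)"] continuous_on_subset[OF cgrho]
    by (metis continuous_on_norm subset_UNIV)
  obtain C where C: "C \<ge> 0" "\<And>x. x \<in> closure \<Omega> \<Longrightarrow>
      \<bar>\<Sum>a\<in>UNIV. \<Sum>b\<in>UNIV. \<bar>grad (\<lambda>y. grad \<rho> y $ a) x $ b\<bar>\<bar> \<le> C"
  proof -
    have "continuous_on (closure \<Omega>) (\<lambda>x. \<Sum>a\<in>UNIV. \<Sum>b\<in>UNIV. \<bar>grad (\<lambda>y. grad \<rho> y $ a) x $ b\<bar>)"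
      by (intro continuous_intros continuous_on_subset[OF cH subset_UNIV])
    from cont_bound[OF cpt this] show ?thesis using that by blast
  qed
  have Cab: "\<bar>grad (\<lambda>y. grad \<rho> y $ a) x $ b\<bar> \<le> C" if "x \<in> closure \<Omega>" for x a b
  proof -
    have "\<bar>grad (\<lambda>y. grad \<rho> y $ a) x $ b\<bar> \<le> (\<Sum>b\<in>UNIV. \<bar>grad (\<lambda>y. grad \<rho> y $ a) x $ b\<bar>)"
      by (rule member_le_sum) auto
    also have "\<dots> \<le> (\<Sum>a\<in>UNIV. \<Sum>b\<in>UNIV. \<bar>grad (\<lambda>y. grad \<rho> y $ a) x $ b\<bar>)"
      by (rule member_le_sum) (auto intro: sum_nonneg)
    also have "\<dots> \<le> C" using C(2)[OF that] by simp
    finally show ?thesis .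
  qed
  define M where "M = (SUP q\<in>\<Omega> \<times> UNIV \<times> {0..T}. norm (case q of (x,z,t) \<Rightarrow> f x z t))"
  define c0 where "c0 = (SUP x\<in>\<Omega>. \<bar>u0 x\<bar>)"
  have bddM: "bdd_above ((\<lambda>q. norm (case q of (x,z,t) \<Rightarrow> f x z t)) ` (\<Omega> \<times> UNIV \<times> {0..T}))"
  proof -
    obtain B where B: "\<forall>y\<in>(\<lambda>(x,z,t). f x z t) ` (\<Omega> \<times> UNIV \<times> {0..}). norm y \<le> B"
      using f_bdd unfolding bounded_iff by blast
    show ?thesis
    proof (rule bdd_aboveI)
      fix y assume "y \<in> (\<lambda>q. norm (case q of (x,z,t) \<Rightarrow> f x z t)) ` (\<Omega> \<times> UNIV \<times> {0..T})"
      then obtain x z t where "x \<in> \<Omega>" "0 \<le> t" "t \<le> T" "y = norm (f x z t)" by auto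
      then show "y \<le> B" using B by force
    qed
  qed
  have fM: "norm (f x z t) \<le> M" if "x \<in> \<Omega>" "0 \<le> t" "t \<le> T" for x z t
  proof -
    have "(x,z,t) \<in> \<Omega> \<times> UNIV \<times> {0..T}" using that by auto
    from cSUP_upper[OF this bddM] show ?thesis by (simp add: M_def)
  qed
  have M0: "M \<ge> 0"
  proof -
    obtain x where "x \<in> \<Omega>" using dom(3) by blast
    from fM[OF this, of 0 0] T show ?thesis by (meson norm_ge_zero order_trans less_imp_le order_refl)
  qed
  have cu0: "continuous_on (closure \<Omega>) (\<lambda>x. u (x,0))" by (rule cont_slice[OF u_cont]) (use T in auto)
  have bddc: "bdd_above ((\<lambda>x. \<bar>u0 x\<bar>) ` \<Omega>)"
  proof -
    obtain B where "B \<ge> 0" "\<forall>x\<in>closure \<Omega>. \<bar>u (x,0)\<bar> \<le> B" using cont_bound[OF cpt cu0] by blast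
    then show ?thesis using init closure_subset by (intro bdd_aboveI) force
  qed
  have u0c: "\<bar>u (x,0)\<bar> \<le> c0" if "x \<in> closure \<Omega>" for x
  proof (rule continuous_le_on_closure[OF _ that])
    show "continuous_on (closure \<Omega>) (\<lambda>x. \<bar>u (x,0)\<bar>)" by (intro continuous_intros cu0)
    fix y assume "y \<in> \<Omega>"
    then show "\<bar>u (y,0)\<bar> \<le> c0" unfolding c0_def using cSUP_upper[OF _ bddc] init by force
  qed
  have core: "\<sigma>*u(x,t) - (M+\<delta>)*t - c0 - \<epsilon>*\<rho> x \<le> \<epsilon>*R"
    if sg: "\<sigma> = 1 \<or> \<sigma> = -1" and dl: "\<delta> > 0" and ep: "\<epsilon> > 0"
      and small: "\<epsilon> * (2*C*CARD('n)^2 + M*G) < \<delta>"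
      and xt: "x \<in> closure \<Omega>" "0 \<le> t" "t < T" for \<sigma> \<delta> \<epsilon> x t
  proof (rule ccontr)
    assume nc: "\<not> ?thesis"
    define V where "V p = \<sigma>*u p - (M+\<delta>) * snd p - c0 - \<epsilon>*\<rho> (fst p)" for p
    define K where "K = closure \<Omega> \<times> {0..t}"
    have cK: "compact K" unfolding K_def by (intro compact_Times cpt compact_Icc)
    have xtK: "(x,t) \<in> K" using xt by (simp add: K_def)
    have KT: "K \<subseteq> closure \<Omega> \<times> {0..<T}" using xt by (auto simp: K_def)
    have cV: "continuous_on K V"
    proof -
      have cu: "continuous_on K u" using continuous_on_subset[OF u_cont KT] .
      have cr: "continuous_on K (\<lambda>p. \<rho> (fst p))"
        using continuous_on_compose2[OF crho continuous_on_fst[OF continuous_on_id]] by blast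
      show ?thesis unfolding V_def by (intro continuous_intros cu cr)
    qed
    obtain pm where pm: "pm \<in> K" "\<And>y. y \<in> K \<Longrightarrow> V y \<le> V pm"
      using continuous_attains_sup[OF cK _ cV] xtK by blast
    obtain x1 t1 where pm1: "pm = (x1,t1)" by fastforce
    have x1c: "x1 \<in> closure \<Omega>" and t10: "0 \<le> t1" and t1t: "t1 \<le> t" using pm(1) pm1 by (auto simp: K_def)
    have t1T: "t1 < T" using t1t xt by simp
    have big: "V (x1,t1) > \<epsilon>*R" using pm(2)[OF xtK] nc pm1 by (simp add: V_def)
    have sa: "\<sigma>*a \<le> \<bar>a\<bar>" for a using sg by auto
    have t1pos: "t1 > 0"
    proof (rule ccontr)
      assume "\<not> t1 > 0"
      then have t1z: "t1 = 0" using t10 by simp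
      have "V (x1,t1) = \<sigma>*u(x1,0) - c0 - \<epsilon>*\<rho> x1" by (simp add: V_def t1z)
      also have "\<dots> \<le> \<bar>u(x1,0)\<bar> - c0 + \<epsilon>*\<bar>\<rho> x1\<bar>"
      proof -
        have "\<epsilon> * (- \<rho> x1) \<le> \<epsilon> * \<bar>\<rho> x1\<bar>" using ep by (intro mult_left_mono) auto
        then show ?thesis using sa[of "u(x1,0)"] by simp
      qed
      also have "\<dots> \<le> \<epsilon>*R"
      proof -
        have "\<epsilon> * \<bar>\<rho> x1\<bar> \<le> \<epsilon> * R" using ep R(2)[OF x1c] by (intro mult_left_mono) auto
        then show ?thesis using u0c[OF x1c] by linarith
      qed
      finally show False using big by simp
    qed
    have mxx: "\<sigma>*u(y,t1) - \<epsilon>*\<rho> y \<le> \<sigma>*u(x1,t1) - \<epsilon>*\<rho> x1" if "y \<in> closure \<Omega>" for y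
    proof -
      have "(y,t1) \<in> K" using that t10 t1t by (simp add: K_def)
      from pm(2)[OF this] show ?thesis by (simp add: V_def pm1)
    qed
    have mxt: "\<sigma>*u(x1,s) - (M+\<delta>) * s \<le> \<sigma>*u(x1,t1) - (M+\<delta>)*t1" if "0 \<le> s" "s \<le> t1" for s
    proof -
      have "(x1,s) \<in> K" using that t1t x1c by (simp add: K_def)
      from pm(2)[OF this] show ?thesis by (simp add: V_def pm1)
    qed
    have regp: "(\<lambda>y. u(y,s)) differentiable (at y) \<and> (\<lambda>r. u(y,r)) differentiable (at s)
        \<and> (\<forall>i. (\<lambda>z. dx u(z,s) $ i) differentiable (at y))"
      if "y \<in> \<Omega>" "0 < s" "s < T" for y s
      using reg that unfolding C21_on_def by auto
    have sig: "\<sigma>*\<sigma> = 1" using sg by auto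
    show False
    proof (cases "x1 \<in> \<Omega>")
      case True
      have "\<delta> \<le> \<epsilon> * (2*C*CARD('n)^2 + M*G)"
      proof (rule interior_case[OF op True t1pos])
        show "\<And>y. y \<in> \<Omega> \<Longrightarrow> (\<lambda>y. u (y,t1)) differentiable (at y)" using regp t1pos t1T by blast
        show "(\<lambda>s. u (x1,s)) differentiable (at t1)" using regp True t1pos t1T by blast
        show "\<And>i. (\<lambda>y. dx u (y,t1) $ i) differentiable (at x1)" using regp True t1pos t1T by blast
        show "\<And>y. \<rho> differentiable (at y)" by (rule drho)
        show "\<And>i y. (\<lambda>y. grad \<rho> y $ i) differentiable (at y)" by (rule drhoi)
        show "\<And>y. y \<in> \<Omega> \<Longrightarrow> \<sigma>*u(y,t1) - \<epsilon>*\<rho> y \<le> \<sigma>*u(x1,t1) - \<epsilon>*\<rho> x1"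
          using mxx closure_subset by blast
        show "\<And>s. 0 \<le> s \<Longrightarrow> s \<le> t1 \<Longrightarrow> \<sigma>*u(x1,s) - (M+\<delta>) * s \<le> \<sigma>*u(x1,t1) - (M+\<delta>)*t1"
          by (rule mxt)
        show "dt u (x1,t1) / sqrt (1 + (norm (dx u (x1,t1)))\<^sup>2)
           = divergence (\<lambda>y. dx u (y,t1) /\<^sub>R sqrt (1 + (norm (dx u (y,t1)))\<^sup>2)) x1
             + f x1 (u (x1,t1)) t1 \<bullet> ((- dx u (x1,t1), 1) /\<^sub>R sqrt (1 + (norm (dx u (x1,t1)))\<^sup>2))"
          using pde True t1pos t1T by auto
        show "norm (f x1 (u (x1,t1)) t1) \<le> M" using fM[OF True] t1pos t1T by simp
        show "M \<ge> 0" by (rule M0)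
        show "norm (grad \<rho> x1) \<le> G" using G(2)[OF x1c] by simp
        show "\<And>a b. \<bar>grad (\<lambda>y. grad \<rho> y $ a) x1 $ b\<bar> \<le> C" using Cab[OF x1c] by blast
        show "\<sigma>*\<sigma> = 1" by (rule sig)
        show "\<epsilon> > 0" by (rule ep)
      qed
      then show False using small by simp
    next
      case False
      have rho0: "\<rho> x1 = 0" using cl_le[OF x1c] False Orho by auto
      have fr: "x1 \<in> frontier \<Omega>" using x1c False op by (simp add: frontier_def interior_open)
      have g0: "grad \<rho> x1 \<noteq> 0" by (rule gnz[OF rho0])
      have "Du (x1,t1) \<bullet> \<nu> x1 = 0" using neumann fr t1pos t1T by auto
      then have "(Du (x1,t1) \<bullet> grad \<rho> x1) / norm (grad \<rho> x1) = 0" using nu[OF fr]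
        by (simp add: divide_inverse mult.commute)
      then have neu: "Du (x1,t1) \<bullet> grad \<rho> x1 = 0" using g0 by simp
      show False
      proof (rule boundary_case[OF op Orho x1c rho0 drho cgrho crho])
        show "\<And>y. y \<in> \<Omega> \<Longrightarrow> (\<lambda>y. u (y,t1)) differentiable (at y)" using regp t1pos t1T by blast
        show "continuous_on (closure \<Omega>) (\<lambda>y. u (y,t1))" by (rule cont_slice[OF u_cont]) (use t10 t1T in auto)
        show "continuous_on (closure \<Omega>) (\<lambda>y. Du (y,t1))" by (rule cont_slice[OF Du_cont]) (use t1pos t1T in auto)
        show "\<And>y. y \<in> \<Omega> \<Longrightarrow> Du (y,t1) = dx u (y,t1)" using Du_ext t1pos t1T by auto
        show "Du (x1,t1) \<bullet> grad \<rho> x1 = 0" by (rule neu)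
        show "grad \<rho> x1 \<noteq> 0" by (rule g0)
        show "\<And>y. y \<in> closure \<Omega> \<Longrightarrow> \<sigma>*u(y,t1) - \<epsilon>*\<rho> y \<le> \<sigma>*u(x1,t1) - \<epsilon>*\<rho> x1" by (rule mxx)
        show "\<epsilon> > 0" by (rule ep)
      qed
    qed
  qed
  show ?thesis
  proof
    fix p assume "p \<in> \<Omega> \<times> {0<..<T}"
    then obtain x t where pxt: "p = (x,t)" "x \<in> \<Omega>" "0 < t" "t < T" by auto
    have xc: "x \<in> closure \<Omega>" using pxt closure_subset by auto
    have rx: "\<rho> x < 0" using pxt Orho by auto
    have "\<bar>u (x,t)\<bar> \<le> M * T + c0"
    proof (rule field_le_epsilon)
      fix \<eta> :: real assume eta: "\<eta> > 0"
      define L where "L = 2*C*CARD('n)^2 + M*G + R + 1"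
      have L0: "2*C*CARD('n)^2 + M*G \<ge> 0" using C G M0 by simp
      have L: "L > 0" unfolding L_def using L0 R by simp
      define \<delta> where "\<delta> = \<eta> / (T + 1)"
      define \<epsilon> where "\<epsilon> = \<delta> / L"
      have dl: "\<delta> > 0" unfolding \<delta>_def using eta T by simp
      have ep: "\<epsilon> > 0" unfolding \<epsilon>_def using dl L by simp
      have epL: "\<epsilon> * L = \<delta>" unfolding \<epsilon>_def using L by simp
      have small: "\<epsilon> * (2*C*CARD('n)^2 + M*G) < \<delta>"
      proof -
        have "\<epsilon> * (2*C*CARD('n)^2 + M*G) < \<epsilon> * L" using ep R unfolding L_def
          by (intro mult_strict_left_mono) auto
        then show ?thesis using epL by simp
      qed
      have eR: "\<epsilon> * R \<le> \<delta>"
      proof -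
        have "\<epsilon> * R \<le> \<epsilon> * L" using ep L0 unfolding L_def by (intro mult_left_mono) auto
        then show ?thesis using epL by simp
      qed
      have dT: "\<delta> * (T + 1) = \<eta>" unfolding \<delta>_def using T by simp
      have Mt: "(M+\<delta>)*t \<le> (M+\<delta>)*T" using pxt M0 dl by (intro mult_left_mono) auto
      have erx: "\<epsilon> * \<rho> x \<le> 0" using ep rx by (simp add: mult_pos_neg less_imp_le)
      have b: "\<sigma>*u(x,t) \<le> M * T + c0 + \<eta>" if "\<sigma> = 1 \<or> \<sigma> = -1" for \<sigma>
      proof -
        have "\<sigma>*u(x,t) \<le> (M+\<delta>)*t + c0 + \<epsilon>*\<rho> x + \<epsilon>*R"
          using core[OF that dl ep small xc less_imp_le[OF pxt(3)] pxt(4)] by simp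
        also have "\<dots> \<le> (M+\<delta>)*T + c0 + \<delta>" using Mt erx eR by simp
        also have "\<dots> = M * T + c0 + \<delta> * (T + 1)" by (simp add: algebra_simps)
        finally show ?thesis using dT by simp
      qed
      from b[of 1] b[of "-1"] show "\<bar>u (x,t)\<bar> \<le> M * T + c0 + \<eta>" by auto
    qed
    then show "\<bar>u p\<bar> \<le> (SUP q\<in>\<Omega> \<times> UNIV \<times> {0..T}. norm (case q of (x,z,t) \<Rightarrow> f x z t)) * T
              + (SUP x\<in>\<Omega>. \<bar>u0 x\<bar>)" unfolding M_def c0_def pxt(1) .
  qed
qed

end
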